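(* Let $\mu,\nu$ be Borel probability measures on $[0,1)$ with $\nu$ dyadically doubling ($\nu(\hat I)\le D_\nu\nu(I)$ for $I\in\mathcal{D}\setminus\{[0,1)\}$). Let $I_0=[0,1)\supset I_1\supset I_2\supset\cdots$ be nested intervals with $I_j\in\mathcal{D}$ of length $2^{-j}$, and for $j\ge0$ let $\psi_j\colon\mathbb{R}\to[0,\infty)$ be $L_j$-Lipschitz and supported on $\overline{I_j}$, such that $\Psi := \sum_{j\ge0}\psi_j$ is bounded. Set $\Psi_k := \sum_{j\ge k}\psi_j$. Then for every $N\in\{0,1,2,\ldots\}\cup\{\infty\}$, $$\Big|\int\Psi\,d\mu-\int\Psi\,d\nu\Big|\le\sum_{k=0}^N\frac{L_k}{2^k}\alpha_{\mu,\nu}(I_k)\mu(I_k)+\sum_{k=0}^N\Big(\frac{1}{\nu(I_{k+1})}\int\Psi_{k+1}\,d\nu\Big)\Delta_{\mu,\nu}(I_k)\mu(I_k)+2\|\Psi\|_\infty\,\mu(I_{N+1}),$$ where for $N=\infty$, $I_{N+1}$ means $\bigcap_j I_j$.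
   Context: $\mathcal{D}$: dyadic intervals $[j2^{-k},(j+1)2^{-k})\subset[0,1)$, $k\ge0$; $\hat I$ is the parent of $I$, and $I_-$ is the left half of $I$. $\Delta_{\mu,\nu}(I) := |\mu(I_-)/\mu(I)-\nu(I_-)/\nu(I)|$, with the convention that $\Delta_{\mu,\nu}(I)\mu(I):=0$ if $\mu(I)=0$. Wasserstein distance: $\mathbb{W}_1(\nu_1,\nu_2) := \sup_\psi |\int\psi\,d\nu_1 - \int\psi\,d\nu_2|$ over all $1$-Lipschitz $\psi\colon\mathbb{R}\to\mathbb{R}$ supported on $[0,1]$. $T_I$ is the increasing affine map from $\overline I$ onto $[0,1]$, $\mu_I := T_{I\sharp}(\mu|_I)/\mu(I)$, $\nu_I := T_{I\sharp}(\nu|_I)/\nu(I)$ (zero if the mass vanishes), $\alpha_{\mu,\nu}(I) := \mathbb{W}_1(\mu_I,\nu_I)$. *)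

theory Defs
  imports "HOL-Probability.Probability"
begin

definition dyadic :: "nat \<Rightarrow> nat \<Rightarrow> real set" where
  "dyadic k j = {real j / 2 ^ k ..< (real j + 1) / 2 ^ k}"

definition dyadic_intervals :: "real set set" where
  "dyadic_intervals = {dyadic k j | k j. j < 2 ^ k}"

definition left_half :: "real set \<Rightarrow> real set" where
  "left_half I = {Inf I ..< (Inf I + Sup I) / 2}"

text \<open>Dyadic doubling: nu(parent I) <= D nu(I) for every dyadic I other than [0,1).
  The parent of dyadic (k+1) j is dyadic k (j div 2).\<close>
definition dyadic_doubling :: "real measure \<Rightarrow> real \<Rightarrow> bool" where
  "dyadic_doubling \<nu> D \<longleftrightarrow>
     (\<forall>k j. j < 2 ^ (Suc k) \<longrightarrow>
        measure \<nu> (dyadic k (j div 2)) \<le> D * measure \<nu> (dyadic (Suc k) j))"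

definition dyDelta :: "real measure \<Rightarrow> real measure \<Rightarrow> real set \<Rightarrow> real" where
  "dyDelta \<mu> \<nu> I =
     \<bar>measure \<mu> (left_half I) / measure \<mu> I - measure \<nu> (left_half I) / measure \<nu> I\<bar>"

definition dyDelta_mass :: "real measure \<Rightarrow> real measure \<Rightarrow> real set \<Rightarrow> real" where
  "dyDelta_mass \<mu> \<nu> I = (if measure \<mu> I = 0 then 0 else dyDelta \<mu> \<nu> I * measure \<mu> I)"

definition W1 :: "real measure \<Rightarrow> real measure \<Rightarrow> real" where
  "W1 \<nu>1 \<nu>2 = Sup {\<bar>integral\<^sup>L \<nu>1 \<psi> - integral\<^sup>L \<nu>2 \<psi>\<bar> | \<psi>.
       1-lipschitz_on UNIV \<psi> \<and> (\<forall>x. x \<notin> {0..1} \<longrightarrow> \<psi> x = 0)}"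

definition T_map :: "real set \<Rightarrow> real \<Rightarrow> real" where
  "T_map I x = (x - Inf I) / (Sup I - Inf I)"

text \<open>mu_I = (T_I)_# (mu restricted to I) / mu(I); the zero measure if mu(I) = 0.\<close>
definition blowup :: "real measure \<Rightarrow> real set \<Rightarrow> real measure" where
  "blowup \<mu> I = scale_measure (ennreal (1 / measure \<mu> I))
                  (distr (restrict_space \<mu> I) borel (T_map I))"

definition dyalpha :: "real measure \<Rightarrow> real measure \<Rightarrow> real set \<Rightarrow> real" where
  "dyalpha \<mu> \<nu> I = W1 (blowup \<mu> I) (blowup \<nu> I)"

end

theory Submission
  imports Defs
begin


lemma lip_vanish_right:
  fixes f :: "real \<Rightarrow> real"
  assumes lip: "L-lipschitz_on UNIV f" and z: "\<forall>x. x \<notin> {a..b} \<longrightarrow> f x = 0"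
  shows "f b = 0"
proof (rule ccontr)
  assume ne: "f b \<noteq> 0"
  have L0: "0 \<le> L" using lip lipschitz_on_nonneg by blast
  define e where "e = \<bar>f b\<bar> / (L + 1)"
  have e0: "e > 0" using ne L0 by (simp add: e_def)
  have "f (b + e) = 0" using z e0 by auto
  hence "dist (f b) (f (b + e)) \<le> L * dist b (b + e)" using lipschitz_onD[OF lip] by blast
  hence "\<bar>f b\<bar> \<le> L * e" using e0 \<open>f (b+e) = 0\<close> by (simp add: dist_real_def)
  also have "L * e < \<bar>f b\<bar>" using ne L0 by (simp add: e_def field_simps)
  finally show False by simp
qed

lemma lip_vanish:
  fixes f :: "real \<Rightarrow> real"
  assumes lip: "L-lipschitz_on UNIV f" and z: "\<forall>x. x \<notin> {a..b} \<longrightarrow> f x = 0"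
  shows "x \<notin> {a..<b} \<Longrightarrow> f x = 0"
  using lip_vanish_right[OF lip z] z by (cases "x = b") auto

lemma dyadic_eq: "dyadic k m = {real m / 2^k ..< real m / 2^k + 1 / 2^k}"
  by (simp add: dyadic_def add_divide_distrib)

lemma dyadic_sub:
  assumes "dyadic (Suc k) m' \<subseteq> dyadic k m"
  shows "m' = 2*m \<or> m' = 2*m + 1"
proof -
  have lt: "\<not> (real m' + 1) / 2^Suc k \<le> real m' / 2^Suc k" by (simp add: divide_le_cancel)
  have AB: "real m / 2^k \<le> real m' / 2^Suc k \<and> (real m' + 1) / 2^Suc k \<le> (real m + 1) / 2^k"
    using atLeastLessThan_subset_iff[OF assms[unfolded dyadic_def]] lt by blast
  have "real m / 2^k * 2^Suc k \<le> real m' / 2^Suc k * 2^Suc k"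
    using AB by (intro mult_right_mono) auto
  hence A: "real m * 2 \<le> real m'" by simp
  have "(real m' + 1) / 2^Suc k * 2^Suc k \<le> (real m + 1) / 2^k * 2^Suc k"
    using AB by (intro mult_right_mono) auto
  hence B: "real m' + 1 \<le> (real m + 1) * 2" by simp
  have "2*m \<le> m' \<and> m' + 1 \<le> 2*m+2" using A B by (simp only: of_nat_le_iff[symmetric, where ?'a=real]) (simp add: algebra_simps)
  thus ?thesis by auto
qed

lemma dyadic_Inf: "Inf (dyadic k m) = real m / 2^k"
  unfolding dyadic_def by (rule cInf_atLeastLessThan) (simp add: divide_strict_right_mono)
lemma dyadic_Sup: "Sup (dyadic k m) = (real m + 1) / 2^k"
  unfolding dyadic_def by (rule cSup_atLeastLessThan) (simp add: divide_strict_right_mono)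

lemma left_half_dyadic: "left_half (dyadic k m) = dyadic (Suc k) (2*m)"
  unfolding left_half_def dyadic_Inf dyadic_Sup dyadic_def
  by (simp add: field_simps)

lemma dyadic_split: "dyadic k m = dyadic (Suc k) (2*m) \<union> dyadic (Suc k) (2*m+1)"
  "dyadic (Suc k) (2*m) \<inter> dyadic (Suc k) (2*m+1) = {}"
  unfolding dyadic_def by (auto simp: field_simps)




lemma blowup_sets[simp]: "sets (blowup M I) = sets borel"
  by (simp add: blowup_def)

lemma blowup_finite:
  fixes M :: "real measure"
  assumes "finite_measure M" "I \<in> sets M" and sM: "sets M = sets borel"
  shows "finite_measure (blowup M I)"
proof -
  have Tb: "T_map I \<in> borel_measurable borel" unfolding T_map_def by measurable
  have TM: "T_map I \<in> borel_measurable M" using Tb measurable_cong_sets[OF sM refl] by blast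
  interpret finite_measure "restrict_space M I" using assms(1,2) by (rule finite_measure_restrict_space)
  interpret D: finite_measure "distr (restrict_space M I) borel (T_map I)"
    by (rule finite_measure_distr) (rule measurable_restrict_space1[OF TM])
  show ?thesis unfolding blowup_def
    by (rule finite_measureI) (simp add: space_scale_measure ennreal_mult_eq_top_iff)
qed

lemma lip_bound01:
  fixes g :: "real \<Rightarrow> real"
  assumes "1-lipschitz_on UNIV g" "\<forall>x. x \<notin> {0..1} \<longrightarrow> g x = 0"
  shows "\<bar>g x\<bar> \<le> 2"
proof (cases "x \<in> {0..1}")
  case True
  have "dist (g x) (g 2) \<le> 1 * dist x 2" using lipschitz_onD[OF assms(1)] by blast
  moreover have "g 2 = 0" using assms(2) by auto
  ultimately show ?thesis using True by (auto simp: dist_real_def)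
qed (use assms in auto)

lemma lip_borel:
  fixes g :: "real \<Rightarrow> real"
  assumes "L-lipschitz_on UNIV g"
  shows "g \<in> borel_measurable borel"
  using assms lipschitz_on_continuous_on borel_measurable_continuous_onI by blast

lemma int_bound_fm:
  fixes g :: "real \<Rightarrow> real"
  assumes fm: "finite_measure M" and sM: "sets M = sets borel"
    and "1-lipschitz_on UNIV g" "\<forall>x. x \<notin> {0..1} \<longrightarrow> g x = 0"
  shows "\<bar>integral\<^sup>L M g\<bar> \<le> 2 * measure M (space M)"
proof -
  interpret finite_measure M by fact
  have gm: "g \<in> borel_measurable M"
    using lip_borel[OF assms(3)] measurable_cong_sets[OF sM refl] by blast
  have b: "\<bar>g x\<bar> \<le> 2" for x using lip_bound01[OF assms(3,4)] .
  have ig: "integrable M g" by (rule integrable_const_bound[where B=2]) (use gm b in auto)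
  have "\<bar>integral\<^sup>L M g\<bar> \<le> integral\<^sup>L M (\<lambda>x. \<bar>g x\<bar>)" by (rule integral_abs_bound)
  also have "\<dots> \<le> integral\<^sup>L M (\<lambda>x. 2)"
    by (rule integral_mono[OF integrable_abs[OF ig]]) (use b in auto)
  also have "\<dots> = 2 * measure M (space M)" by simp
  finally show ?thesis .
qed

lemma W1_facts:
  fixes M1 M2 :: "real measure"
  assumes fm1: "finite_measure M1" and s1: "sets M1 = sets borel"
    and fm2: "finite_measure M2" and s2: "sets M2 = sets borel"
  shows "bdd_above {\<bar>integral\<^sup>L M1 \<psi> - integral\<^sup>L M2 \<psi>\<bar> | \<psi> :: real \<Rightarrow> real.
       1-lipschitz_on UNIV \<psi> \<and> (\<forall>x. x \<notin> {0..1} \<longrightarrow> \<psi> x = 0)}"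
proof (rule bdd_aboveI)
  fix y assume "y \<in> {\<bar>integral\<^sup>L M1 \<psi> - integral\<^sup>L M2 \<psi>\<bar> | \<psi> :: real \<Rightarrow> real.
       1-lipschitz_on UNIV \<psi> \<and> (\<forall>x. x \<notin> {0..1} \<longrightarrow> \<psi> x = 0)}"
  then obtain \<psi> where y: "y = \<bar>integral\<^sup>L M1 \<psi> - integral\<^sup>L M2 \<psi>\<bar>"
    and l: "1-lipschitz_on UNIV \<psi>" and z: "\<forall>x. x \<notin> {0..1} \<longrightarrow> \<psi> x = 0" by blast
  have "\<bar>integral\<^sup>L M1 \<psi>\<bar> \<le> 2 * measure M1 (space M1)" by (rule int_bound_fm[OF fm1 s1 l z])
  moreover have "\<bar>integral\<^sup>L M2 \<psi>\<bar> \<le> 2 * measure M2 (space M2)" by (rule int_bound_fm[OF fm2 s2 l z])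
  ultimately show "y \<le> 2 * measure M1 (space M1) + 2 * measure M2 (space M2)" using y by linarith
qed

lemma W1_upper:
  assumes fm1: "finite_measure M1" and s1: "sets M1 = sets borel"
    and fm2: "finite_measure M2" and s2: "sets M2 = sets borel"
    and l: "1-lipschitz_on UNIV g" and z: "\<forall>x. x \<notin> {0..1} \<longrightarrow> g x = 0"
  shows "\<bar>integral\<^sup>L M1 g - integral\<^sup>L M2 g\<bar> \<le> W1 M1 M2"
  unfolding W1_def by (rule cSup_upper[OF _ W1_facts[OF assms(1-4)]]) (use l z in blast)

lemma W1_nonneg:
  assumes fm1: "finite_measure M1" and s1: "sets M1 = sets borel"
    and fm2: "finite_measure M2" and s2: "sets M2 = sets borel"
  shows "0 \<le> W1 M1 M2"
proof -
  have "\<bar>integral\<^sup>L M1 (\<lambda>x. 0::real) - integral\<^sup>L M2 (\<lambda>x. 0)\<bar> \<le> W1 M1 M2"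
    by (rule W1_upper[OF assms]) (auto simp: lipschitz_on_def)
  thus ?thesis by simp
qed

lemma W1_scaled:
  assumes fm1: "finite_measure M1" and s1: "sets M1 = sets borel"
    and fm2: "finite_measure M2" and s2: "sets M2 = sets borel"
    and l: "c-lipschitz_on UNIV h" and z: "\<forall>x. x \<notin> {0..1} \<longrightarrow> h x = 0"
  shows "\<bar>integral\<^sup>L M1 h - integral\<^sup>L M2 h\<bar> \<le> c * W1 M1 M2"
proof (cases "c = 0")
  case True
  have "h x = 0" for x
  proof -
    have "dist (h x) (h 2) \<le> c * dist x 2" using lipschitz_onD[OF l] by blast
    thus ?thesis using True z by auto
  qed
  hence "h = (\<lambda>x. 0)" by auto
  thus ?thesis using True by simp
next
  case False
  hence c0: "c > 0" using lipschitz_on_nonneg[OF l] by simp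
  define g where "g x = h x / c" for x
  have hg: "h = (\<lambda>x. c * g x)" using c0 by (auto simp: g_def)
  have lg: "1-lipschitz_on UNIV g"
  proof (rule lipschitz_onI)
    fix x y :: real
    have "dist (h x) (h y) \<le> c * dist x y" using lipschitz_onD[OF l] by blast
    thus "dist (g x) (g y) \<le> 1 * dist x y" using c0
      by (simp add: g_def dist_real_def diff_divide_distrib[symmetric] abs_divide pos_divide_le_eq mult.commute)
  qed simp
  have zg: "\<forall>x. x \<notin> {0..1} \<longrightarrow> g x = 0" using z by (simp add: g_def)
  have "\<bar>integral\<^sup>L M1 h - integral\<^sup>L M2 h\<bar> = c * \<bar>integral\<^sup>L M1 g - integral\<^sup>L M2 g\<bar>"
    using c0 by (simp add: hg right_diff_distrib[symmetric] abs_mult)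
  also have "\<dots> \<le> c * W1 M1 M2" using c0 W1_upper[OF assms(1-4) lg zg] by simp
  finally show ?thesis .
qed




lemma integral_blowup:
  fixes M :: "real measure" and f h :: "real \<Rightarrow> real"
  assumes fm: "finite_measure M" and sM: "sets M = sets borel" and IM: "I \<in> sets borel"
    and fb: "f \<in> borel_measurable borel" and hb: "h \<in> borel_measurable borel"
    and hnn: "\<forall>x. 0 \<le> h x"
    and fz: "\<forall>x. x \<notin> I \<longrightarrow> f x = 0" and fh: "\<forall>x\<in>I. h (T_map I x) = f x"
  shows "integral\<^sup>L M f = measure M I * integral\<^sup>L (blowup M I) h"
proof -
  interpret finite_measure M by fact
  have fnn: "0 \<le> f x" for x using fz fh hnn by (cases "x \<in> I") (metis, auto)
  have Tb: "T_map I \<in> borel_measurable borel" unfolding T_map_def by measurable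
  have TM: "T_map I \<in> borel_measurable M" using Tb measurable_cong_sets[OF sM refl] by blast
  have TR: "T_map I \<in> measurable (restrict_space M I) borel" by (rule measurable_restrict_space1[OF TM])
  have fM: "f \<in> borel_measurable M" using fb measurable_cong_sets[OF sM refl] by blast
  have hB: "h \<in> borel_measurable (blowup M I)" using hb measurable_cong_sets[OF blowup_sets refl] by blast
  have hD: "h \<in> borel_measurable (distr (restrict_space M I) borel (T_map I))"
    using hb measurable_cong_sets[of "distr (restrict_space M I) borel (T_map I)" borel] by simp
  have IsM: "I \<inter> space M \<in> sets M" using IM sM by (simp add: sets.Int_space_eq2)
  have 1: "integral\<^sup>L (blowup M I) h = enn2real (\<integral>\<^sup>+x. ennreal (h x) \<partial>blowup M I)"
    by (rule integral_eq_nn_integral) (use hnn hB in auto)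
  have 2: "(\<integral>\<^sup>+x. ennreal (h x) \<partial>blowup M I)
       = ennreal (1 / measure M I) * (\<integral>\<^sup>+x. ennreal (h x) \<partial>distr (restrict_space M I) borel (T_map I))"
    unfolding blowup_def by (rule nn_integral_scale_measure) (use hD in simp)
  have 3: "(\<integral>\<^sup>+x. ennreal (h x) \<partial>distr (restrict_space M I) borel (T_map I))
      = (\<integral>\<^sup>+x. ennreal (h (T_map I x)) \<partial>restrict_space M I)"
    by (rule nn_integral_distr[OF TR]) (use hb in simp)
  have 4: "\<dots> = (\<integral>\<^sup>+x. ennreal (h (T_map I x)) * indicator I x \<partial>M)"
    by (rule nn_integral_restrict_space[OF IsM])
  have 5: "\<dots> = (\<integral>\<^sup>+x. ennreal (f x) \<partial>M)"
    by (rule nn_integral_cong) (use fz fh in \<open>auto simp: indicator_def\<close>)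
  have 6: "integral\<^sup>L M f = enn2real (\<integral>\<^sup>+x. ennreal (f x) \<partial>M)"
    by (rule integral_eq_nn_integral) (use fnn fM in auto)
  show ?thesis
  proof (cases "measure M I = 0")
    case True
    have "I \<in> null_sets M" using True IM sM by (simp add: null_sets_def emeasure_eq_measure)
    hence ae: "AE x in M. x \<notin> I" by (rule AE_not_in)
    have "(\<integral>\<^sup>+x. ennreal (f x) \<partial>M) = (\<integral>\<^sup>+x. 0 \<partial>M)"
      by (rule nn_integral_cong_AE) (use ae fz in auto)
    thus ?thesis using 6 True by simp
  next
    case False
    hence pos: "measure M I > 0" using measure_nonneg[of M I] by linarith
    have "integral\<^sup>L (blowup M I) h = (1 / measure M I) * integral\<^sup>L M f"
      unfolding 1 2 3 4 5 6 using pos by (simp add: enn2real_mult)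
    thus ?thesis using pos by simp
  qed
qed




lemma P_bound:
  fixes \<mu> \<nu> :: "real measure" and \<psi> :: "real \<Rightarrow> real"
  assumes fmu: "finite_measure \<mu>" and smu: "sets \<mu> = sets borel"
    and fnu: "finite_measure \<nu>" and snu: "sets \<nu> = sets borel"
    and lip: "L-lipschitz_on UNIV \<psi>" and nn: "\<forall>x. 0 \<le> \<psi> x"
    and supp: "\<forall>x. x \<notin> closure (dyadic k m) \<longrightarrow> \<psi> x = 0"
    and npos: "measure \<nu> (dyadic k m) > 0"
  shows "\<bar>integral\<^sup>L \<mu> \<psi> - measure \<mu> (dyadic k m) / measure \<nu> (dyadic k m) * integral\<^sup>L \<nu> \<psi>\<bar>
         \<le> L / 2^k * dyalpha \<mu> \<nu> (dyadic k m) * measure \<mu> (dyadic k m)"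
proof -
  define lo where "lo = real m / 2^k"
  define I where "I = dyadic k m"
  have Ieq: "I = {lo ..< lo + 1/2^k}" by (simp add: I_def lo_def dyadic_eq)
  have cl: "closure I = {lo .. lo + 1/2^k}" unfolding Ieq by (rule closure_atLeastLessThan) simp
  have z: "\<forall>x. x \<notin> I \<longrightarrow> \<psi> x = 0"
    using lip_vanish[OF lip, of lo "lo + 1/2^k"] supp cl Ieq I_def by auto
  define h where "h t = \<psi> (lo + t / 2^k)" for t
  have Tm: "T_map I x = (x - lo) * 2^k" for x
    unfolding T_map_def I_def dyadic_Inf dyadic_Sup lo_def by (simp add: field_simps)
  have hT: "\<forall>x\<in>I. h (T_map I x) = \<psi> x" by (simp add: h_def Tm)
  have hlip: "(L / 2^k)-lipschitz_on UNIV h"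
  proof (rule lipschitz_onI)
    fix s t :: real
    have "dist (h s) (h t) \<le> L * dist (lo + s / 2^k) (lo + t / 2^k)"
      unfolding h_def using lipschitz_onD[OF lip] by blast
    also have "dist (lo + s / 2^k) (lo + t / 2^k) = dist s t / 2^k"
      by (simp add: dist_real_def diff_divide_distrib[symmetric] abs_divide)
    finally show "dist (h s) (h t) \<le> L / 2 ^ k * dist s t" by simp
  next
    show "0 \<le> L / 2^k" using lipschitz_on_nonneg[OF lip] by simp
  qed
  have hz: "\<forall>t. t \<notin> {0..1} \<longrightarrow> h t = 0"
  proof (intro allI impI)
    fix t :: real assume "t \<notin> {0..1}"
    hence "t < 0 \<or> t > 1" by auto
    hence "lo + t / 2^k < lo \<or> lo + t / 2^k > lo + 1/2^k"
      by (auto simp: divide_strict_right_mono divide_neg_pos)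
    hence "lo + t / 2^k \<notin> closure I" unfolding cl by auto
    thus "h t = 0" using supp I_def h_def by auto
  qed
  have hnn: "\<forall>x. 0 \<le> h x" using nn by (simp add: h_def)
  have hb: "h \<in> borel_measurable borel" by (rule lip_borel[OF hlip])
  have pb: "\<psi> \<in> borel_measurable borel" by (rule lip_borel[OF lip])
  have IB: "I \<in> sets borel" unfolding Ieq by simp
  have e1: "integral\<^sup>L \<mu> \<psi> = measure \<mu> I * integral\<^sup>L (blowup \<mu> I) h"
    by (rule integral_blowup[OF fmu smu IB pb hb hnn z hT])
  have e2: "integral\<^sup>L \<nu> \<psi> = measure \<nu> I * integral\<^sup>L (blowup \<nu> I) h"
    by (rule integral_blowup[OF fnu snu IB pb hb hnn z hT])
  have IM1: "I \<in> sets \<mu>" using IB smu by simp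
  have IM2: "I \<in> sets \<nu>" using IB snu by simp
  have W: "\<bar>integral\<^sup>L (blowup \<mu> I) h - integral\<^sup>L (blowup \<nu> I) h\<bar> \<le> L / 2^k * W1 (blowup \<mu> I) (blowup \<nu> I)"
    by (rule W1_scaled[OF blowup_finite[OF fmu IM1 smu] blowup_sets blowup_finite[OF fnu IM2 snu] blowup_sets hlip hz])
  have np: "measure \<nu> I > 0" using npos I_def by simp
  have "integral\<^sup>L \<mu> \<psi> - measure \<mu> I / measure \<nu> I * integral\<^sup>L \<nu> \<psi>
      = measure \<mu> I * (integral\<^sup>L (blowup \<mu> I) h - integral\<^sup>L (blowup \<nu> I) h)"
    unfolding e1 e2 using np by (simp add: field_simps)
  hence "\<bar>integral\<^sup>L \<mu> \<psi> - measure \<mu> I / measure \<nu> I * integral\<^sup>L \<nu> \<psi>\<bar>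
      = measure \<mu> I * \<bar>integral\<^sup>L (blowup \<mu> I) h - integral\<^sup>L (blowup \<nu> I) h\<bar>"
    by (simp add: abs_mult)
  also have "\<dots> \<le> measure \<mu> I * (L / 2^k * W1 (blowup \<mu> I) (blowup \<nu> I))"
    by (rule mult_left_mono[OF W]) simp
  finally show ?thesis unfolding dyalpha_def I_def by (simp add: mult_ac)
qed




lemma Q_eq:
  fixes \<mu> \<nu> :: "real measure"
  assumes fmu: "finite_measure \<mu>" and smu: "sets \<mu> = sets borel"
    and fnu: "finite_measure \<nu>" and snu: "sets \<nu> = sets borel"
    and np: "measure \<nu> (dyadic k m) > 0"
    and mm: "m' = 2*m \<or> m' = 2*m+1"
  shows "\<bar>measure \<mu> (dyadic (Suc k) m') - measure \<mu> (dyadic k m) * measure \<nu> (dyadic (Suc k) m') / measure \<nu> (dyadic k m)\<bar>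
     = dyDelta_mass \<mu> \<nu> (dyadic k m)"
proof -
  interpret M: finite_measure \<mu> by fact
  interpret N: finite_measure \<nu> by fact
  define L where "L = dyadic (Suc k) (2*m)"
  define R where "R = dyadic (Suc k) (2*m+1)"
  have LB: "L \<in> sets borel" "R \<in> sets borel" by (simp_all add: L_def R_def dyadic_def)
  have mI: "measure \<mu> (dyadic k m) = measure \<mu> L + measure \<mu> R"
    using dyadic_split[of k m] M.finite_measure_Union[of L R] LB smu by (simp add: L_def R_def)
  have nI: "measure \<nu> (dyadic k m) = measure \<nu> L + measure \<nu> R"
    using dyadic_split[of k m] N.finite_measure_Union[of L R] LB snu by (simp add: L_def R_def)
  have lh: "left_half (dyadic k m) = L" by (simp add: L_def left_half_dyadic)
  have nn: "measure \<mu> L \<ge> 0" "measure \<mu> R \<ge> 0" by simp_all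
  show ?thesis
  proof (cases "measure \<mu> (dyadic k m) = 0")
    case True
    hence "measure \<mu> L = 0" "measure \<mu> R = 0" using mI nn by linarith+
    thus ?thesis using mm True by (auto simp: dyDelta_mass_def L_def R_def)
  next
    case False
    have D: "dyDelta_mass \<mu> \<nu> (dyadic k m) =
      \<bar>measure \<mu> L / measure \<mu> (dyadic k m) - measure \<nu> L / measure \<nu> (dyadic k m)\<bar> * measure \<mu> (dyadic k m)"
      using False by (simp add: dyDelta_mass_def dyDelta_def lh)
    have pos: "measure \<mu> (dyadic k m) > 0" using False measure_nonneg[of \<mu> "dyadic k m"] by linarith
    have key: "\<bar>measure \<mu> L - measure \<mu> (dyadic k m) * measure \<nu> L / measure \<nu> (dyadic k m)\<bar>
       = \<bar>measure \<mu> L / measure \<mu> (dyadic k m) - measure \<nu> L / measure \<nu> (dyadic k m)\<bar> * measure \<mu> (dyadic k m)"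
    proof -
      have "measure \<mu> L - measure \<mu> (dyadic k m) * measure \<nu> L / measure \<nu> (dyadic k m)
         = (measure \<mu> L / measure \<mu> (dyadic k m) - measure \<nu> L / measure \<nu> (dyadic k m)) * measure \<mu> (dyadic k m)"
        using pos np by (simp add: field_simps)
      thus ?thesis using pos by (simp add: abs_mult)
    qed
    from mm show ?thesis
    proof
      assume "m' = 2*m" thus ?thesis using key D by (simp add: L_def)
    next
      assume m': "m' = 2*m+1"
      have "measure \<mu> R - measure \<mu> (dyadic k m) * measure \<nu> R / measure \<nu> (dyadic k m)
          = - (measure \<mu> L - measure \<mu> (dyadic k m) * measure \<nu> L / measure \<nu> (dyadic k m))"
        using np mI nI by (simp add: field_simps)
      hence E2: "\<bar>measure \<mu> R - measure \<mu> (dyadic k m) * measure \<nu> R / measure \<nu> (dyadic k m)\<bar>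
          = \<bar>measure \<mu> L - measure \<mu> (dyadic k m) * measure \<nu> L / measure \<nu> (dyadic k m)\<bar>"
        by (metis abs_minus_cancel)
      show ?thesis unfolding m' R_def[symmetric] using E2 key D by linarith
    qed
  qed
qed

lemma doubling_pos:
  fixes \<nu> :: "real measure"
  assumes dbl: "dyadic_doubling \<nu> D" and n0: "measure \<nu> (dyadic 0 0) > 0"
  shows "j < 2^k \<Longrightarrow> measure \<nu> (dyadic k j) > 0"
proof (induction k arbitrary: j)
  case 0 thus ?case using n0 by simp
next
  case (Suc k)
  have "j div 2 < 2^k" using Suc.prems by auto
  hence p: "measure \<nu> (dyadic k (j div 2)) > 0" by (rule Suc.IH)
  have "measure \<nu> (dyadic k (j div 2)) \<le> D * measure \<nu> (dyadic (Suc k) j)"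
    using dbl Suc.prems unfolding dyadic_doubling_def by blast
  hence "measure \<nu> (dyadic (Suc k) j) \<noteq> 0" using p by auto
  thus ?case using measure_nonneg[of \<nu> "dyadic (Suc k) j"] by linarith
qed

lemma int_le_ind:
  fixes M :: "real measure" and f :: "real \<Rightarrow> real"
  assumes fm: "finite_measure M" and sM: "sets M = sets borel" and fb: "f \<in> borel_measurable borel"
    and nn: "\<And>x. 0 \<le> f x" and le: "\<And>x. f x \<le> C" and z: "\<And>x. x \<notin> A \<Longrightarrow> f x = 0"
    and A: "A \<in> sets borel"
  shows "0 \<le> integral\<^sup>L M f" "integral\<^sup>L M f \<le> C * measure M A"
proof -
  interpret finite_measure M by fact
  have fM: "f \<in> borel_measurable M" using fb measurable_cong_sets[OF sM refl] by blast
  have AM: "A \<in> sets M" using A sM by simp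
  show "0 \<le> integral\<^sup>L M f" using nn by simp
  have C0: "0 \<le> C" using nn[of 0] le[of 0] by linarith
  have "integral\<^sup>L M f \<le> integral\<^sup>L M (\<lambda>x. C * indicator A x)"
  proof (rule integral_mono)
    show "integrable M f" by (rule integrable_const_bound[where B=C]) (use fM nn le in auto)
    show "integrable M (\<lambda>x. C * indicator A x)"
      by (rule integrable_const_bound[where B=C]) (use AM C0 in \<open>auto simp: indicator_def\<close>)
    show "f x \<le> C * indicator A x" for x using le z by (cases "x \<in> A") auto
  qed
  also have "\<dots> = C * measure M A" using AM by simp
  finally show "integral\<^sup>L M f \<le> C * measure M A" .
qed




theorem mainTheorem13:
  fixes \<mu> \<nu> :: "real measure" and D :: real
    and I :: "nat \<Rightarrow> real set"
    and \<psi> :: "nat \<Rightarrow> real \<Rightarrow> real" and L :: "nat \<Rightarrow> real"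
  assumes mu_borel: "sets \<mu> = sets borel" and mu_prob: "prob_space \<mu>"
    and mu_supp: "emeasure \<mu> {0..<1} = 1"
    and nu_borel: "sets \<nu> = sets borel" and nu_prob: "prob_space \<nu>"
    and nu_supp: "emeasure \<nu> {0..<1} = 1"
    and doubling: "dyadic_doubling \<nu> D"
    and I_dyadic: "\<forall>j. \<exists>m < 2 ^ j. I j = dyadic j m"
    and I_nested: "\<forall>j. I (Suc j) \<subseteq> I j"
    and psi_nonneg: "\<forall>j x. 0 \<le> \<psi> j x"
    and psi_lip: "\<forall>j. (L j)-lipschitz_on UNIV (\<psi> j)"
    and psi_supp: "\<forall>j x. x \<notin> closure (I j) \<longrightarrow> \<psi> j x = 0"
    and Psi_bdd: "\<exists>B. \<forall>x n. (\<Sum>j<n. \<psi> j x) \<le> B"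
  defines "Psi \<equiv> \<lambda>x. \<Sum>j. \<psi> j x"
    and "Psik \<equiv> \<lambda>k x. \<Sum>j. \<psi> (j + k) x"
    and "supPsi \<equiv> (SUP x. \<bar>\<Sum>j. \<psi> j x\<bar>)"
  shows "(\<forall>N::nat. \<bar>integral\<^sup>L \<mu> Psi - integral\<^sup>L \<nu> Psi\<bar>
            \<le> (\<Sum>k\<le>N. L k / 2 ^ k * dyalpha \<mu> \<nu> (I k) * measure \<mu> (I k))
              + (\<Sum>k\<le>N. (integral\<^sup>L \<nu> (Psik (Suc k)) / measure \<nu> (I (Suc k)))
                          * dyDelta_mass \<mu> \<nu> (I k))
              + 2 * supPsi * measure \<mu> (I (Suc N)))
       \<and> ennreal \<bar>integral\<^sup>L \<mu> Psi - integral\<^sup>L \<nu> Psi\<bar>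
            \<le> (\<Sum>k. ennreal (L k / 2 ^ k * dyalpha \<mu> \<nu> (I k) * measure \<mu> (I k)))
              + (\<Sum>k. ennreal ((integral\<^sup>L \<nu> (Psik (Suc k)) / measure \<nu> (I (Suc k)))
                          * dyDelta_mass \<mu> \<nu> (I k)))
              + ennreal (2 * supPsi * measure \<mu> (\<Inter>j. I j))"
proof -
  interpret mu: prob_space \<mu> by fact
  interpret nu: prob_space \<nu> by fact
  have fmu: "finite_measure \<mu>" by (rule mu.finite_measure_axioms)
  have fnu: "finite_measure \<nu>" by (rule nu.finite_measure_axioms)
  have "\<exists>m. \<forall>j. m j < 2^j \<and> I j = dyadic j (m j)"
    by (rule choice) (use I_dyadic in blast)
  then obtain m where mlt: "\<And>j. m j < 2^j" and Im: "\<And>j. I j = dyadic j (m j)" by blast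
  have IB: "\<And>j. I j \<in> sets borel" by (simp add: Im dyadic_def)
  have Imu: "\<And>j. I j \<in> sets \<mu>" using IB mu_borel by simp
  have Inu: "\<And>j. I j \<in> sets \<nu>" using IB nu_borel by simp
  have nested: "\<And>j k. I (j + k) \<subseteq> I k"
  proof -
    fix j k show "I (j + k) \<subseteq> I k"
      by (induction j) (use I_nested in auto)
  qed
  have msplit: "\<And>k. m (Suc k) = 2 * m k \<or> m (Suc k) = 2 * m k + 1"
    using dyadic_sub I_nested Im by metis
  have m0: "m 0 = 0" using mlt[of 0] by simp
  have I0: "I 0 = {0..<1}" by (simp add: Im m0 dyadic_def)
  have mu0: "measure \<mu> (I 0) = 1" using mu_supp I0 mu.emeasure_eq_measure by simp
  have nu0: "measure \<nu> (I 0) = 1" using nu_supp I0 nu.emeasure_eq_measure by simp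
  have d0: "measure \<nu> (dyadic 0 0) > 0" using nu0 Im[of 0] m0 by simp
  have npos: "\<And>k. measure \<nu> (I k) > 0"
    using doubling_pos[OF doubling d0 mlt] Im by simp
  have lipk: "\<And>j. (L j)-lipschitz_on UNIV (\<psi> j)" using psi_lip by blast
  have L0: "\<And>j. 0 \<le> L j" using lipk lipschitz_on_nonneg by blast
  have pz: "\<And>j x. x \<notin> I j \<Longrightarrow> \<psi> j x = 0"
  proof -
    fix j x assume x: "x \<notin> I j"
    have Ieq: "I j = {real (m j) / 2^j ..< real (m j) / 2^j + 1/2^j}" by (simp add: Im dyadic_eq)
    have cl: "closure (I j) = {real (m j) / 2^j .. real (m j) / 2^j + 1/2^j}"
      unfolding Ieq by (rule closure_atLeastLessThan) simp
    show "\<psi> j x = 0"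
      using lip_vanish[OF lipk[of j], of "real (m j) / 2^j" "real (m j) / 2^j + 1/2^j" x] psi_supp cl x Ieq
      by auto
  qed
  obtain B where B: "\<And>x n. (\<Sum>j<n. \<psi> j x) \<le> B" using Psi_bdd by blast
  have pnn: "\<And>j x. 0 \<le> \<psi> j x" using psi_nonneg by blast
  have summ: "\<And>x. summable (\<lambda>j. \<psi> j x)"
    by (rule summableI_nonneg_bounded[where x=B]) (use pnn B in auto)
  have summk: "\<And>x k. summable (\<lambda>j. \<psi> (j + k) x)"
    using summ summable_ignore_initial_segment by blast
  have PsiE: "\<And>x. Psi x = (\<Sum>j. \<psi> j x)" by (simp add: Psi_def)
  have PsikE: "\<And>k x. Psik k x = (\<Sum>j. \<psi> (j + k) x)" by (simp add: Psik_def)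
  have supE: "supPsi = (SUP x. \<bar>Psi x\<bar>)" by (simp add: supPsi_def Psi_def)
  have Psi_nn: "\<And>x. 0 \<le> Psi x" unfolding PsiE by (rule suminf_nonneg[OF summ pnn])
  have Psi_le: "\<And>x. Psi x \<le> B" unfolding PsiE by (rule suminf_le_const[OF summ B])
  have bdd: "bdd_above (range (\<lambda>x. \<bar>Psi x\<bar>))"
    by (rule bdd_aboveI[where M=B]) (use Psi_nn Psi_le in auto)
  have Psi_sup: "\<And>x. Psi x \<le> supPsi"
  proof -
    fix x have "\<bar>Psi x\<bar> \<le> supPsi" unfolding supE by (rule cSUP_upper[OF _ bdd]) simp
    thus "Psi x \<le> supPsi" by simp
  qed
  have sup_nn: "0 \<le> supPsi" using Psi_nn[of 0] Psi_sup[of 0] by linarith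
  have Psik_nn: "\<And>k x. 0 \<le> Psik k x" unfolding PsikE by (rule suminf_nonneg[OF summk pnn])
  have Psik_le: "\<And>k x. Psik k x \<le> Psi x"
  proof -
    fix k x
    have "Psi x = Psik k x + (\<Sum>i<k. \<psi> i x)"
      unfolding PsiE PsikE by (rule suminf_split_initial_segment[OF summ])
    moreover have "0 \<le> (\<Sum>i<k. \<psi> i x)" by (rule sum_nonneg) (use pnn in auto)
    ultimately show "Psik k x \<le> Psi x" by linarith
  qed
  have Psik_rec: "\<And>k x. Psik k x = \<psi> k x + Psik (Suc k) x"
  proof -
    fix k x
    have "(\<Sum>n. \<psi> (Suc n + k) x) = (\<Sum>n. \<psi> (n + k) x) - \<psi> (0 + k) x"
      by (rule suminf_split_head[OF summk])
    thus "Psik k x = \<psi> k x + Psik (Suc k) x" unfolding PsikE by simp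
  qed
  have Psik_z: "\<And>k x. x \<notin> I k \<Longrightarrow> Psik k x = 0"
  proof -
    fix k x assume x: "x \<notin> I k"
    have "\<And>j. \<psi> (j + k) x = 0" using pz nested x by blast
    thus "Psik k x = 0" unfolding PsikE by simp
  qed
  have p_le: "\<And>k x. \<psi> k x \<le> supPsi"
  proof -
    fix k x
    have "\<psi> k x \<le> Psik k x" using Psik_rec[of k x] Psik_nn[of "Suc k" x] by linarith
    thus "\<psi> k x \<le> supPsi" using Psik_le[of k x] Psi_sup[of x] by linarith
  qed
  have Pk_sup: "\<And>k x. Psik k x \<le> supPsi" using Psik_le Psi_sup order_trans by blast
  have pB: "\<And>j. \<psi> j \<in> borel_measurable borel" using lip_borel lipk by blast
  have PkB: "\<And>k. Psik k \<in> borel_measurable borel"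
  proof -
    fix k
    have "(\<lambda>x. \<Sum>j. \<psi> (j + k) x) \<in> borel_measurable borel"
      by (rule borel_measurable_suminf) (rule pB)
    thus "Psik k \<in> borel_measurable borel" using PsikE by presburger
  qed
  have Pk0: "Psik 0 = Psi" by (rule ext) (simp add: PsikE PsiE)
  have intg: "\<And>(M::real measure) (f::real \<Rightarrow> real). finite_measure M \<Longrightarrow> sets M = sets borel \<Longrightarrow> f \<in> borel_measurable borel
     \<Longrightarrow> (\<And>x. 0 \<le> f x) \<Longrightarrow> (\<And>x. f x \<le> supPsi) \<Longrightarrow> integrable M f"
  proof -
    fix M :: "real measure" and f :: "real \<Rightarrow> real"
    assume fm: "finite_measure M" and s: "sets M = sets borel" and fb: "f \<in> borel_measurable borel"
      and n: "\<And>x. 0 \<le> f x" and l: "\<And>x. f x \<le> supPsi"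
    interpret finite_measure M by fact
    have "f \<in> borel_measurable M" using fb measurable_cong_sets[OF s refl] by blast
    thus "integrable M f" by (intro integrable_const_bound[where B=supPsi]) (use n l in auto)
  qed
  define mI where "mI k = measure \<mu> (I k)" for k
  define nI where "nI k = measure \<nu> (I k)" for k
  define a where "a k = integral\<^sup>L \<mu> (Psik k)" for k
  define b where "b k = integral\<^sup>L \<nu> (Psik k)" for k
  define E where "E k = a k - mI k * b k / nI k" for k
  define T1 where "T1 k = L k / 2 ^ k * dyalpha \<mu> \<nu> (I k) * measure \<mu> (I k)" for k
  define T2 where "T2 k = (integral\<^sup>L \<nu> (Psik (Suc k)) / measure \<nu> (I (Suc k))) * dyDelta_mass \<mu> \<nu> (I k)" for k
  have nIp: "\<And>k. nI k > 0" using npos nI_def by simp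
  have ab_rec: "a k = integral\<^sup>L \<mu> (\<psi> k) + a (Suc k) \<and> b k = integral\<^sup>L \<nu> (\<psi> k) + b (Suc k)" for k
  proof -
    have e: "Psik k = (\<lambda>x. \<psi> k x + Psik (Suc k) x)" using Psik_rec by (rule ext)
    have i1: "integrable \<mu> (\<psi> k)" "integrable \<mu> (Psik (Suc k))"
      using intg[OF fmu mu_borel] pB PkB pnn p_le Psik_nn Pk_sup by blast+
    have i2: "integrable \<nu> (\<psi> k)" "integrable \<nu> (Psik (Suc k))"
      using intg[OF fnu nu_borel] pB PkB pnn p_le Psik_nn Pk_sup by blast+
    show ?thesis unfolding a_def b_def e using i1 i2 by simp
  qed
  have step: "\<bar>E k - E (Suc k)\<bar> \<le> T1 k + T2 k" for k
  proof -
    define P where "P = integral\<^sup>L \<mu> (\<psi> k) - mI k / nI k * integral\<^sup>L \<nu> (\<psi> k)"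
    define Q where "Q = b (Suc k) / nI (Suc k) * (mI (Suc k) - mI k * nI (Suc k) / nI k)"
    have "E k - E (Suc k) = P + Q"
      unfolding E_def P_def Q_def using ab_rec[of k] nIp[of k] nIp[of "Suc k"]
      by (simp add: field_simps)
    moreover have "\<bar>P\<bar> \<le> T1 k"
      unfolding P_def T1_def mI_def nI_def Im
      by (rule P_bound[OF fmu mu_borel fnu nu_borel lipk]) (use pnn psi_supp Im npos in auto)
    moreover have "\<bar>Q\<bar> = T2 k"
    proof -
      have b0: "0 \<le> b (Suc k) / nI (Suc k)"
        unfolding b_def using Psik_nn nIp[of "Suc k"] by simp
      have "\<bar>mI (Suc k) - mI k * nI (Suc k) / nI k\<bar> = dyDelta_mass \<mu> \<nu> (I k)"
        unfolding mI_def nI_def Im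
        by (rule Q_eq[OF fmu mu_borel fnu nu_borel]) (use npos Im msplit in auto)
      hence "\<bar>Q\<bar> = b (Suc k) / nI (Suc k) * dyDelta_mass \<mu> \<nu> (I k)"
        unfolding Q_def abs_mult abs_of_nonneg[OF b0] by simp
      thus ?thesis by (simp add: T2_def b_def nI_def)
    qed
    ultimately show ?thesis by linarith
  qed
  have last: "\<bar>E (Suc N)\<bar> \<le> 2 * supPsi * measure \<mu> (I (Suc N))" for N
  proof -
    have a1: "0 \<le> a (Suc N)" "a (Suc N) \<le> supPsi * mI (Suc N)"
      unfolding a_def mI_def
      using int_le_ind[OF fmu mu_borel PkB[of "Suc N"] Psik_nn[of "Suc N"] Pk_sup[of "Suc N"] Psik_z[of _ "Suc N"] IB[of "Suc N"]]
      by blast+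
    have b1: "0 \<le> b (Suc N)" "b (Suc N) \<le> supPsi * nI (Suc N)"
      unfolding b_def nI_def
      using int_le_ind[OF fnu nu_borel PkB[of "Suc N"] Psik_nn[of "Suc N"] Pk_sup[of "Suc N"] Psik_z[of _ "Suc N"] IB[of "Suc N"]]
      by blast+
    have m1: "0 \<le> mI (Suc N)" by (simp add: mI_def)
    have q0: "0 \<le> b (Suc N) / nI (Suc N)" using b1 nIp[of "Suc N"] by simp
    have q1: "b (Suc N) / nI (Suc N) \<le> supPsi" using b1 nIp[of "Suc N"] by (simp add: divide_le_eq)
    have r0: "0 \<le> mI (Suc N) * (b (Suc N) / nI (Suc N))" by (rule mult_nonneg_nonneg[OF m1 q0])
    have r1: "mI (Suc N) * (b (Suc N) / nI (Suc N)) \<le> mI (Suc N) * supPsi" by (rule mult_left_mono[OF q1 m1])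
    have Ee: "E (Suc N) = a (Suc N) - mI (Suc N) * (b (Suc N) / nI (Suc N))" by (simp add: E_def)
    have "\<bar>E (Suc N)\<bar> \<le> supPsi * mI (Suc N)"
      unfolding Ee using a1 r0 r1 by (simp only: abs_le_iff mult.commute[of "mI (Suc N)" supPsi]) linarith
    also have "\<dots> \<le> 2 * supPsi * mI (Suc N)" using sup_nn m1 by (simp add: mult_right_mono)
    finally show ?thesis by (simp add: mI_def)
  qed
  have E0: "E 0 = integral\<^sup>L \<mu> Psi - integral\<^sup>L \<nu> Psi"
    unfolding E_def a_def b_def mI_def nI_def using mu0 nu0 Pk0 by simp
  have fin: "\<bar>integral\<^sup>L \<mu> Psi - integral\<^sup>L \<nu> Psi\<bar> \<le> (\<Sum>k\<le>N. T1 k) + (\<Sum>k\<le>N. T2 k) + 2 * supPsi * measure \<mu> (I (Suc N))" for N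
  proof -
    have tel: "E 0 - E (Suc N) = (\<Sum>k\<le>N. E k - E (Suc k))"
      unfolding lessThan_Suc_atMost[symmetric] by (rule sum_lessThan_telescope'[symmetric])
    have "\<bar>E 0 - E (Suc N)\<bar> \<le> (\<Sum>k\<le>N. \<bar>E k - E (Suc k)\<bar>)" unfolding tel by (rule sum_abs)
    also have "\<dots> \<le> (\<Sum>k\<le>N. T1 k + T2 k)" by (rule sum_mono) (rule step)
    finally have "\<bar>E 0 - E (Suc N)\<bar> \<le> (\<Sum>k\<le>N. T1 k) + (\<Sum>k\<le>N. T2 k)" by (simp add: sum.distrib)
    thus ?thesis using last[of N] E0 by linarith
  qed
    have T1nn: "0 \<le> T1 k" for k
    proof -
      have "0 \<le> dyalpha \<mu> \<nu> (I k)" unfolding dyalpha_def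
        by (rule W1_nonneg[OF blowup_finite[OF fmu Imu mu_borel] blowup_sets blowup_finite[OF fnu Inu nu_borel] blowup_sets])
      thus ?thesis unfolding T1_def using L0[of k] by simp
    qed
    have T2nn: "0 \<le> T2 k" for k
    proof -
      have "0 \<le> integral\<^sup>L \<nu> (Psik (Suc k))" using Psik_nn by simp
      moreover have "0 \<le> dyDelta_mass \<mu> \<nu> (I k)" by (simp add: dyDelta_mass_def dyDelta_def)
      ultimately show ?thesis unfolding T2_def using npos[of "Suc k"] by simp
    qed
    define S1 where "S1 = (\<Sum>k. ennreal (T1 k))"
    define S2 where "S2 = (\<Sum>k. ennreal (T2 k))"
    have le1: "ennreal (\<Sum>k\<le>N. T1 k) \<le> S1" for N
    proof -
      have "ennreal (\<Sum>k\<le>N. T1 k) = (\<Sum>k\<le>N. ennreal (T1 k))" using T1nn by simp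
      also have "\<dots> \<le> S1" unfolding S1_def by (rule sum_le_suminf) auto
      finally show ?thesis .
    qed
    have le2: "ennreal (\<Sum>k\<le>N. T2 k) \<le> S2" for N
    proof -
      have "ennreal (\<Sum>k\<le>N. T2 k) = (\<Sum>k\<le>N. ennreal (T2 k))" using T2nn by simp
      also have "\<dots> \<le> S2" unfolding S2_def by (rule sum_le_suminf) auto
      finally show ?thesis .
    qed
    have bnd: "ennreal \<bar>integral\<^sup>L \<mu> Psi - integral\<^sup>L \<nu> Psi\<bar> \<le> S1 + S2 + ennreal (2 * supPsi * measure \<mu> (I (Suc N)))" for N
    proof -
      have s1: "0 \<le> (\<Sum>k\<le>N. T1 k)" by (rule sum_nonneg) (use T1nn in auto)
      have s2: "0 \<le> (\<Sum>k\<le>N. T2 k)" by (rule sum_nonneg) (use T2nn in auto)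
      have s3: "0 \<le> 2 * supPsi * measure \<mu> (I (Suc N))" using sup_nn by simp
      have "ennreal \<bar>integral\<^sup>L \<mu> Psi - integral\<^sup>L \<nu> Psi\<bar> \<le> ennreal ((\<Sum>k\<le>N. T1 k) + (\<Sum>k\<le>N. T2 k) + 2 * supPsi * measure \<mu> (I (Suc N)))"
        by (rule ennreal_leI[OF fin])
      also have "\<dots> = ennreal (\<Sum>k\<le>N. T1 k) + ennreal (\<Sum>k\<le>N. T2 k) + ennreal (2 * supPsi * measure \<mu> (I (Suc N)))"
        using s1 s2 s3 by (simp add: ennreal_plus)
      also have "\<dots> \<le> S1 + S2 + ennreal (2 * supPsi * measure \<mu> (I (Suc N)))"
        using le1[of N] le2[of N] by (intro add_mono) auto
      finally show ?thesis .
    qed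
    have dec: "decseq I" using I_nested by (intro decseq_SucI) auto
    have lim0: "(\<lambda>n. measure \<mu> (I n)) \<longlonglongrightarrow> measure \<mu> (\<Inter>j. I j)"
      by (rule mu.finite_Lim_measure_decseq) (use Imu dec in auto)
    have lim1: "(\<lambda>N. measure \<mu> (I (Suc N))) \<longlonglongrightarrow> measure \<mu> (\<Inter>j. I j)"
      using LIMSEQ_Suc[OF lim0] .
    have lim2: "(\<lambda>N. S1 + S2 + ennreal (2 * supPsi * measure \<mu> (I (Suc N))))
        \<longlonglongrightarrow> S1 + S2 + ennreal (2 * supPsi * measure \<mu> (\<Inter>j. I j))"
      by (intro tendsto_add tendsto_const tendsto_ennrealI tendsto_mult_left lim1)
    have "ennreal \<bar>integral\<^sup>L \<mu> Psi - integral\<^sup>L \<nu> Psi\<bar> \<le> S1 + S2 + ennreal (2 * supPsi * measure \<mu> (\<Inter>j. I j))"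
      by (rule LIMSEQ_le_const[OF lim2]) (use bnd in blast)
    thus ?thesis using fin unfolding S1_def S2_def T1_def T2_def by blast
qed


end
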